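(* Let $\mathbb{H}^1_2$ be the complexified Heisenberg group. Then $\mathbb{R}^2$ factorizes $\mathbb{H}^1_2$ as a quotient: $\mathbb{R}^2$ is an h-quotient of $\mathbb{H}^1_2$, and every normal homogeneous subgroup $N$ of $\mathbb{H}^1_2$ such that $\mathbb{H}^1_2/N$ is h-isomorphic to $\mathbb{R}^2$ has a complementary homogeneous subgroup.
   Context: $\mathbb{H}^1_2$ is the connected simply connected Lie group whose Lie algebra $\mathfrak{h}^1_2$ has basis $R_0,R_1,R_2,R_3,Z_1,Z_2$ with the only nonzero brackets $[R_0,R_1]=[R_2,R_3]=Z_1$, $[R_0,R_2]=-[R_1,R_3]=Z_2$; it is stratified with first layer $\mathrm{span}\{R_0,\ldots,R_3\}$ and second layer $\mathrm{span}\{Z_1,Z_2\}$; dilations $\delta_r$ act by $r$ on the first layer and $r^2$ on the second. $\mathbb{R}^2$ is the graded group with one layer and dilations $v\mapsto rv$. h-homomorphism: group homomorphism commuting with dilations; h-isomorphism: invertible one. Homogeneous subgroup: closed connected simply connected Lie subgroup invariant under dilations. $\mathbb{R}^2$ is an h-quotient of $\mathbb{H}^1_2$ if $\mathbb{H}^1_2/N$ is h-isomorphic to $\mathbb{R}^2$ for some normal homogeneous subgroup $N$. Homogeneous subgroups $A,B$ are complementary if $AB=\mathbb{H}^1_2$ and $A\cap B=\{e\}$. *)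

theory Defs
  imports "HOL-Analysis.Analysis"
begin

text \<open>The complexified Heisenberg group H^1_2 in exponential coordinates.
  A point (a0,a1,a2,a3,z1,z2) stands for exp(a0 R0 + a1 R1 + a2 R2 + a3 R3 + z1 Z1 + z2 Z2).
  By the Baker-Campbell-Hausdorff formula (step 2) the product is
  exp X * exp Y = exp (X + Y + [X,Y]/2).\<close>

type_synonym H12 = "real \<times> real \<times> real \<times> real \<times> real \<times> real"

text \<open>The Lie bracket of two first-layer vectors, as coefficients of Z1 and Z2:
  [R0,R1] = [R2,R3] = Z1, [R0,R2] = Z2, [R1,R3] = -Z2.\<close>
fun hmul :: "H12 \<Rightarrow> H12 \<Rightarrow> H12" where
  "hmul (a0, a1, a2, a3, z1, z2) (b0, b1, b2, b3, w1, w2) =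
     (a0 + b0, a1 + b1, a2 + b2, a3 + b3,
      z1 + w1 + (a0 * b1 - a1 * b0 + a2 * b3 - a3 * b2) / 2,
      z2 + w2 + (a0 * b2 - a2 * b0 - a1 * b3 + a3 * b1) / 2)"

definition hunit :: H12 where "hunit = (0, 0, 0, 0, 0, 0)"

fun hinv :: "H12 \<Rightarrow> H12" where
  "hinv (a0, a1, a2, a3, z1, z2) = (- a0, - a1, - a2, - a3, - z1, - z2)"

fun hdil :: "real \<Rightarrow> H12 \<Rightarrow> H12" where
  "hdil r (a0, a1, a2, a3, z1, z2) = (r * a0, r * a1, r * a2, r * a3, r^2 * z1, r^2 * z2)"

definition hsubgroup :: "H12 set \<Rightarrow> bool" where
  "hsubgroup S \<longleftrightarrow> hunit \<in> S \<and> (\<forall>x\<in>S. \<forall>y\<in>S. hmul x y \<in> S) \<and> (\<forall>x\<in>S. hinv x \<in> S)"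

text \<open>Homogeneous subgroup: closed connected simply connected (Lie) subgroup invariant
  under dilations. (A closed subgroup of a Lie group is an embedded Lie subgroup.)\<close>
definition homogeneous_subgroup :: "H12 set \<Rightarrow> bool" where
  "homogeneous_subgroup S \<longleftrightarrow> hsubgroup S \<and> closed S \<and> connected S \<and> simply_connected S
     \<and> (\<forall>r>0. hdil r ` S \<subseteq> S)"

definition normal_hsubgroup :: "H12 set \<Rightarrow> bool" where
  "normal_hsubgroup N \<longleftrightarrow> (\<forall>g n. n \<in> N \<longrightarrow> hmul (hmul g n) (hinv g) \<in> N)"

definition hcoset :: "H12 \<Rightarrow> H12 set \<Rightarrow> H12 set" where
  "hcoset g N = hmul g ` N"

definition hquot :: "H12 set \<Rightarrow> H12 set set" where
  "hquot N = range (\<lambda>g. hcoset g N)"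

text \<open>H/N is h-isomorphic to R^2: there is a bijection psi from the cosets onto R^2 that is
  a group homomorphism (for the coset product gN * hN = ghN), commutes with the induced
  dilations (delta_r(gN) = delta_r(g)N) and is continuous for the quotient topology
  (i.e. psi composed with the projection is continuous).\<close>
definition quotient_h_iso_R2 :: "H12 set \<Rightarrow> bool" where
  "quotient_h_iso_R2 N \<longleftrightarrow>
     (\<exists>\<psi> :: H12 set \<Rightarrow> real \<times> real.
        bij_betw \<psi> (hquot N) UNIV
      \<and> (\<forall>g h. \<psi> (hcoset (hmul g h) N) = \<psi> (hcoset g N) + \<psi> (hcoset h N))
      \<and> (\<forall>r>0. \<forall>g. \<psi> (hcoset (hdil r g) N) = r *\<^sub>R \<psi> (hcoset g N))
      \<and> continuous_on UNIV (\<lambda>g. \<psi> (hcoset g N)))"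

definition is_h_quotient_R2 :: bool where
  "is_h_quotient_R2 \<longleftrightarrow>
     (\<exists>N. homogeneous_subgroup N \<and> normal_hsubgroup N \<and> quotient_h_iso_R2 N)"

definition complementary :: "H12 set \<Rightarrow> H12 set \<Rightarrow> bool" where
  "complementary A B \<longleftrightarrow> {hmul a b | a b. a \<in> A \<and> b \<in> B} = UNIV \<and> A \<inter> B = {hunit}"

end

theory Submission
  imports Defs
begin

lemma H12_cases: obtains a0 a1 a2 a3 z1 z2 where "(g::H12) = (a0,a1,a2,a3,z1,z2)"
  by (metis prod.collapse)

lemma hmul_assoc: "hmul (hmul x y) z = hmul x (hmul y z)"
  by (cases x rule: H12_cases; cases y rule: H12_cases; cases z rule: H12_cases)
     (simp add: field_simps)

lemma hmul_unit_l[simp]: "hmul hunit g = g"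
  by (cases g rule: H12_cases) (simp add: hunit_def)
lemma hmul_unit_r[simp]: "hmul g hunit = g"
  by (cases g rule: H12_cases) (simp add: hunit_def)
lemma hmul_inv_l[simp]: "hmul (hinv g) g = hunit"
  by (cases g rule: H12_cases) (simp add: hunit_def algebra_simps)
lemma hmul_inv_r[simp]: "hmul g (hinv g) = hunit"
  by (cases g rule: H12_cases) (simp add: hunit_def algebra_simps)

lemma linear_range_props:
  fixes f :: "'a::euclidean_space \<Rightarrow> H12"
  assumes "linear f"
  shows "closed (range f) \<and> connected (range f) \<and> simply_connected (range f)"
proof -
  have s: "subspace (range f)" using assms subspace_UNIV linear_subspace_image by blast
  then have c: "convex (range f)" by (rule subspace_imp_convex)
  show ?thesis using s c closed_subspace convex_connected convex_imp_simply_connected by blast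
qed

locale hhom =
  fixes \<phi> :: "H12 \<Rightarrow> real \<times> real"
  assumes hom: "\<And>g h. \<phi> (hmul g h) = \<phi> g + \<phi> h"
    and dil: "\<And>r g. r > 0 \<Longrightarrow> \<phi> (hdil r g) = r *\<^sub>R \<phi> g"
begin

lemma unit0: "\<phi> hunit = 0"
  using hom[of hunit hunit] by simp

lemma inv: "\<phi> (hinv g) = - \<phi> g"
  using hom[of "hinv g" g] unit0 by (simp add: eq_neg_iff_add_eq_0 add.commute)

lemma central: "\<phi> (0,0,0,0,z1,z2) = 0"
proof -
  let ?c = "(0,0,0,0,z1,z2) :: H12"
  have "hmul (hmul ?c ?c) (hmul ?c ?c) = hdil 2 ?c" by simp
  then have "\<phi> (hmul (hmul ?c ?c) (hmul ?c ?c)) = 2 *\<^sub>R \<phi> ?c"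
    using dil[of 2 ?c] by simp
  then have "\<phi> ?c + \<phi> ?c + (\<phi> ?c + \<phi> ?c) = 2 *\<^sub>R \<phi> ?c"
    by (simp only: hom)
  then have "\<phi> ?c + \<phi> ?c = 0" by (simp add: scaleR_2)
  then have "2 *\<^sub>R \<phi> ?c = 0" by (simp add: scaleR_2)
  then show ?thesis by simp
qed

lemma horiz: "\<phi> (a0,a1,a2,a3,z1,z2) = \<phi> (a0,a1,a2,a3,0,0)"
proof -
  have "hmul (a0,a1,a2,a3,0,0) (0,0,0,0,z1,z2) = (a0,a1,a2,a3,z1,z2)" by simp
  then show ?thesis using hom central by (metis add.right_neutral)
qed

lemma addh: "\<phi> (a0+b0,a1+b1,a2+b2,a3+b3,0,0) = \<phi> (a0,a1,a2,a3,0,0) + \<phi> (b0,b1,b2,b3,0,0)"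
proof -
  have "\<phi> (hmul (a0,a1,a2,a3,0,0) (b0,b1,b2,b3,0,0)) = \<phi> (a0+b0,a1+b1,a2+b2,a3+b3,0,0)"
    unfolding hmul.simps by (rule horiz)
  then show ?thesis using hom by metis
qed

lemma scaleh: "\<phi> (t * x0,t * x1,t * x2,t * x3,0,0) = t *\<^sub>R \<phi> (x0,x1,x2,x3,0,0)"
proof -
  consider "t > 0" | "t = 0" | "t < 0" by linarith
  then show ?thesis
  proof cases
    case 1
    then show ?thesis using dil[of t "(x0,x1,x2,x3,0,0)"] by simp
  next
    case 2
    then show ?thesis using unit0 by (simp add: hunit_def)
  next
    case 3
    have "\<phi> (hmul (t * x0,t * x1,t * x2,t * x3,0,0) ((-t) * x0,(-t) * x1,(-t) * x2,(-t) * x3,0,0)) = 0"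
      using unit0 by (simp add: hunit_def algebra_simps)
    then have "\<phi> (t * x0,t * x1,t * x2,t * x3,0,0) = - \<phi> ((-t) * x0,(-t) * x1,(-t) * x2,(-t) * x3,0,0)"
      using hom by (metis eq_neg_iff_add_eq_0)
    also have "\<dots> = t *\<^sub>R \<phi> (x0,x1,x2,x3,0,0)"
      using 3 dil[of "-t" "(x0,x1,x2,x3,0,0)"] by simp
    finally show ?thesis .
  qed
qed

definition "c0 = \<phi> (1,0,0,0,0,0)"
definition "c1 = \<phi> (0,1,0,0,0,0)"
definition "c2 = \<phi> (0,0,1,0,0,0)"
definition "c3 = \<phi> (0,0,0,1,0,0)"

lemma formula: "\<phi> (a0,a1,a2,a3,z1,z2) = a0 *\<^sub>R c0 + a1 *\<^sub>R c1 + a2 *\<^sub>R c2 + a3 *\<^sub>R c3"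
proof -
  have "\<phi> (a0,a1,a2,a3,z1,z2) = \<phi> (a0 + 0 + 0 + 0, 0 + a1 + 0 + 0, 0 + 0 + a2 + 0, 0 + 0 + 0 + a3, 0, 0)"
    using horiz[of a0 a1 a2 a3 z1 z2] by simp
  also have "\<dots> = \<phi> (a0 * 1,a0 * 0,a0 * 0,a0 * 0,0,0) + \<phi> (a1 * 0,a1 * 1,a1 * 0,a1 * 0,0,0)
     + \<phi> (a2 * 0,a2 * 0,a2 * 1,a2 * 0,0,0) + \<phi> (a3 * 0,a3 * 0,a3 * 0,a3 * 1,0,0)"
    unfolding addh by simp
  also have "\<dots> = a0 *\<^sub>R c0 + a1 *\<^sub>R c1 + a2 *\<^sub>R c2 + a3 *\<^sub>R c3"
    unfolding scaleh c0_def c1_def c2_def c3_def ..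
  finally show ?thesis .
qed

lemma coset_eq:
  assumes N: "N = {g. \<phi> g = 0}"
  shows "hcoset g N = {x. \<phi> x = \<phi> g}"
proof safe
  fix x assume "x \<in> hcoset g N"
  then show "\<phi> x = \<phi> g" using N by (auto simp: hcoset_def hom)
next
  fix x assume "\<phi> x = \<phi> g"
  then have "hmul (hinv g) x \<in> N" using N hom inv by simp
  moreover have "x = hmul g (hmul (hinv g) x)" by (simp flip: hmul_assoc)
  ultimately show "x \<in> hcoset g N" by (auto simp: hcoset_def)
qed


lemma quot_iso:
  assumes surj: "\<And>y. \<exists>g. \<phi> g = y" and cont: "continuous_on UNIV \<phi>"
  shows "quotient_h_iso_R2 {g. \<phi> g = 0}"
proof -
  let ?N = "{g. \<phi> g = 0}"
  define psi where "psi S = \<phi> (SOME x. x \<in> S)" for S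
  have ce: "hcoset g ?N = {x. \<phi> x = \<phi> g}" for g by (rule coset_eq) simp
  have ps: "psi (hcoset g ?N) = \<phi> g" for g
    unfolding psi_def ce by (rule someI2[of _ g]) auto
  have inj: "inj_on psi (hquot ?N)"
  proof (rule inj_onI)
    fix S T assume "S \<in> hquot ?N" "T \<in> hquot ?N" "psi S = psi T"
    then obtain g h where "S = hcoset g ?N" "T = hcoset h ?N" "psi S = psi T" unfolding hquot_def by blast
    then show "S = T" using ps ce by simp
  qed
  have img: "psi ` hquot ?N = UNIV"
  proof (rule set_eqI)
    fix y
    obtain g where "\<phi> g = y" using surj by blast
    then have "y = psi (hcoset g ?N)" "hcoset g ?N \<in> hquot ?N" by (simp_all add: ps hquot_def)
    then show "y \<in> psi ` hquot ?N \<longleftrightarrow> y \<in> UNIV" by blast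
  qed
  have "(\<lambda>g. psi (hcoset g ?N)) = \<phi>" using ps by auto
  then show ?thesis unfolding quotient_h_iso_R2_def
    using inj img cont hom dil ps by (intro exI[of _ psi]) (auto simp: bij_betw_def)
qed

lemma complement:
  fixes ua ub uc ud va vb vc vd :: real
  assumes N: "N = {g. \<phi> g = 0}"
    and w1: "ua * vb - ub * va + uc * vd - ud * vc = 0" and w2: "ua * vc - uc * va - ub * vd + ud * vb = 0"
    and d: "fst (\<phi> (ua,ub,uc,ud,0,0)) * snd (\<phi> (va,vb,vc,vd,0,0))
            - snd (\<phi> (ua,ub,uc,ud,0,0)) * fst (\<phi> (va,vb,vc,vd,0,0)) \<noteq> 0"
  shows "\<exists>A. homogeneous_subgroup A \<and> complementary A N"
proof -
  define f where "f = (\<lambda>(s::real,t::real). (s * ua+t * va, s * ub+t * vb, s * uc+t * vc, s * ud+t * vd, 0::real, 0::real))"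
  define A where "A = range f"
  obtain p1 p2 where P: "\<phi> (ua,ub,uc,ud,0,0) = (p1,p2)" by fastforce
  obtain q1 q2 where Q: "\<phi> (va,vb,vc,vd,0,0) = (q1,q2)" by fastforce
  have dd: "p1 * q2 - p2 * q1 \<noteq> 0" using d P Q by simp
  have lin: "linear f"
  proof (rule linearI)
    fix x y :: "real \<times> real"
    show "f (x + y) = f x + f y" by (cases x; cases y) (simp add: f_def algebra_simps)
  next
    fix c :: real and x :: "real \<times> real"
    show "f (c *\<^sub>R x) = c *\<^sub>R f x" by (cases x) (simp add: f_def algebra_simps)
  qed
  have phif: "\<phi> (f (s,t)) = s *\<^sub>R (p1,p2) + t *\<^sub>R (q1,q2)" for s t
  proof -
    have "\<phi> (f (s,t)) = \<phi> (s * ua + t * va, s * ub + t * vb, s * uc + t * vc, s * ud + t * vd, 0, 0)"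
      unfolding f_def prod.case ..
    also have "\<dots> = \<phi> (s * ua, s * ub, s * uc, s * ud, 0, 0) + \<phi> (t * va, t * vb, t * vc, t * vd, 0, 0)"
      by (rule addh)
    also have "\<dots> = s *\<^sub>R (p1,p2) + t *\<^sub>R (q1,q2)"
      unfolding scaleh P Q ..
    finally show ?thesis .
  qed
  have mulf: "hmul (f (s,t)) (f (s2,t2)) = f (s+s2, t+t2)" for s t s2 t2
  proof -
    have e1: "(s * ua+t * va) * (s2 * ub+t2 * vb) - (s * ub+t * vb) * (s2 * ua+t2 * va) + (s * uc+t * vc) * (s2 * ud+t2 * vd) - (s * ud+t * vd) * (s2 * uc+t2 * vc)
      = (s * t2 - t * s2) * (ua * vb - ub * va + uc * vd - ud * vc)" by algebra
    have e2: "(s * ua+t * va) * (s2 * uc+t2 * vc) - (s * uc+t * vc) * (s2 * ua+t2 * va) - (s * ub+t * vb) * (s2 * ud+t2 * vd) + (s * ud+t * vd) * (s2 * ub+t2 * vb)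
      = (s * t2 - t * s2) * (ua * vc - uc * va - ub * vd + ud * vb)" by algebra
    note z = e1[unfolded w1 mult_zero_right] e2[unfolded w2 mult_zero_right]
    show ?thesis unfolding f_def prod.case hmul.simps z prod.inject
      by (intro conjI; simp add: algebra_simps)
  qed
  have hs1: "hunit \<in> A" unfolding A_def
    by (rule range_eqI[of _ _ "(0,0)"]) (simp add: f_def hunit_def)
  have hs2: "hmul x y \<in> A" if xy: "x \<in> A" "y \<in> A" for x y
  proof -
    obtain p q where "x = f p" "y = f q" using xy unfolding A_def by blast
    moreover obtain s t s2 t2 where "p = (s,t)" "q = (s2,t2)" by fastforce
    ultimately have "x = f (s,t)" "y = f (s2,t2)" by auto
    then show ?thesis by (simp add: mulf A_def)
  qed
  have hs3: "hinv x \<in> A" if xA: "x \<in> A" for x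
  proof -
    obtain p where "x = f p" using xA unfolding A_def by blast
    moreover obtain s t where "p = (s,t)" by fastforce
    ultimately have "x = f (s,t)" by auto
    then have "hinv x = f (-s,-t)" by (simp add: f_def)
    then show ?thesis by (simp add: A_def)
  qed
  have hs: "hsubgroup A" unfolding hsubgroup_def using hs1 hs2 hs3 by blast
  have hd: "\<forall>r>0. hdil r ` A \<subseteq> A"
  proof (intro allI impI subsetI)
    fix r :: real and y assume "y \<in> hdil r ` A"
    then obtain p where "y = hdil r (f p)" unfolding A_def by blast
    moreover obtain s t where "p = (s,t)" by fastforce
    ultimately have "y = hdil r (f (s,t))" by auto
    then have "y = f (r * s, r * t)" by (simp add: f_def algebra_simps)
    then show "y \<in> A" by (simp add: A_def)
  qed
  have hA: "homogeneous_subgroup A"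
    unfolding homogeneous_subgroup_def using hs hd linear_range_props[OF lin, folded A_def] by blast
  have cov: "\<exists>a b. g = hmul a b \<and> a \<in> A \<and> b \<in> N" for g
  proof -
    obtain y1 y2 where Y: "\<phi> g = (y1,y2)" by fastforce
    define s where "s = (y1 * q2 - y2 * q1) / (p1 * q2 - p2 * q1)"
    define t where "t = (p1 * y2 - p2 * y1) / (p1 * q2 - p2 * q1)"
    have n1: "(y1 * q2 - y2 * q1) * p1 + (p1 * y2 - p2 * y1) * q1 = y1 * (p1 * q2 - p2 * q1)" by algebra
    have n2: "(y1 * q2 - y2 * q1) * p2 + (p1 * y2 - p2 * y1) * q2 = y2 * (p1 * q2 - p2 * q1)" by algebra
    have "s * p1 + t * q1 = ((y1 * q2 - y2 * q1) * p1 + (p1 * y2 - p2 * y1) * q1) / (p1 * q2 - p2 * q1)"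
      by (simp add: s_def t_def add_divide_distrib)
    also have "\<dots> = y1" using dd by (simp only: n1) simp
    finally have st1: "s * p1 + t * q1 = y1" .
    have "s * p2 + t * q2 = ((y1 * q2 - y2 * q1) * p2 + (p1 * y2 - p2 * y1) * q2) / (p1 * q2 - p2 * q1)"
      by (simp add: s_def t_def add_divide_distrib)
    also have "\<dots> = y2" using dd by (simp only: n2) simp
    finally have st2: "s * p2 + t * q2 = y2" .
    have st: "s *\<^sub>R (p1,p2) + t *\<^sub>R (q1,q2) = (y1,y2)" using st1 st2 by simp
    define a where "a = f (s,t)"
    define b where "b = hmul (hinv a) g"
    have "g = hmul a b" by (simp add: b_def flip: hmul_assoc)
    moreover have "a \<in> A" by (simp add: a_def A_def)
    moreover have "b \<in> N" using N st1 st2 by (simp add: b_def hom inv a_def phif Y zero_prod_def)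
    ultimately show ?thesis by blast
  qed
  have hN: "hunit \<in> N" using N unit0 by simp
  have int1: "x = hunit" if xAN: "x \<in> A" "x \<in> N" for x
  proof -
    obtain p where "x = f p" and "\<phi> x = 0" using xAN N unfolding A_def by blast
    moreover obtain s t where "p = (s,t)" by fastforce
    ultimately have x: "x = f (s,t)" and "\<phi> (f (s,t)) = 0" by auto
    then have "(s * p1 + t * q1, s * p2 + t * q2) = (0,0)" by (simp add: phif zero_prod_def)
    then have e: "s * p1 + t * q1 = 0" "s * p2 + t * q2 = 0" by simp_all
    have "s * (p1 * q2 - p2 * q1) = (s * p1 + t * q1) * q2 - (s * p2 + t * q2) * q1" by algebra
    then have "s * (p1 * q2 - p2 * q1) = 0" using e by simp
    moreover have "t * (p1 * q2 - p2 * q1) = (s * p2 + t * q2) * p1 - (s * p1 + t * q1) * p2" by algebra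
    then have "t * (p1 * q2 - p2 * q1) = 0" using e by simp
    ultimately have "s = 0" "t = 0" using dd by simp_all
    then show "x = hunit" by (simp add: x f_def hunit_def)
  qed
  have int: "A \<inter> N = {hunit}" using int1 hN hs1 by blast
  have "{hmul a b | a b. a \<in> A \<and> b \<in> N} = UNIV"
  proof (rule set_eqI)
    fix g
    obtain a b where "g = hmul a b" "a \<in> A" "b \<in> N" using cov[of g] by blast
    then show "g \<in> {hmul a b | a b. a \<in> A \<and> b \<in> N} \<longleftrightarrow> g \<in> UNIV" by blast
  qed
  then have "complementary A N"
    unfolding complementary_def using int by blast
  then show ?thesis using hA by blast
qed

end

lemma csub: assumes "hsubgroup N" "g \<in> N" shows "hcoset g N = N"
proof
  show "hcoset g N \<subseteq> N" using assms unfolding hsubgroup_def hcoset_def by blast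
  show "N \<subseteq> hcoset g N"
  proof
    fix n assume n: "n \<in> N"
    have "n = hmul g (hmul (hinv g) n)" by (simp flip: hmul_assoc)
    moreover have "hmul (hinv g) n \<in> N" using assms n unfolding hsubgroup_def by blast
    ultimately show "n \<in> hcoset g N" unfolding hcoset_def by blast
  qed
qed

lemma part1: "is_h_quotient_R2"
proof -
  define \<phi>0 where "\<phi>0 = (\<lambda>g::H12. (fst g, fst (snd g)))"
  interpret P0: hhom \<phi>0
  proof
    fix g h show "\<phi>0 (hmul g h) = \<phi>0 g + \<phi>0 h"
      by (cases g rule: H12_cases; cases h rule: H12_cases) (simp add: \<phi>0_def)
  next
    fix r :: real and g assume "r > 0"
    then show "\<phi>0 (hdil r g) = r *\<^sub>R \<phi>0 g"
      by (cases g rule: H12_cases) (simp add: \<phi>0_def)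
  qed
  define N0 where "N0 = {g. \<phi>0 g = 0}"
  define f0 where "f0 = (\<lambda>(a::real,b::real,c::real,d::real). (0::real,0::real,a,b,c,d))"
  have lin: "linear f0"
  proof (rule linearI)
    fix x y :: "real \<times> real \<times> real \<times> real"
    show "f0 (x + y) = f0 x + f0 y" by (auto simp: f0_def split: prod.splits)
  next
    fix c :: real and x :: "real \<times> real \<times> real \<times> real"
    show "f0 (c *\<^sub>R x) = c *\<^sub>R f0 x" by (auto simp: f0_def split: prod.splits)
  qed
  have rng: "range f0 = N0"
  proof (rule set_eqI)
    fix x :: H12
    obtain a0 a1 a2 a3 z1 z2 where x: "x = (a0,a1,a2,a3,z1,z2)" by (rule H12_cases)
    show "x \<in> range f0 \<longleftrightarrow> x \<in> N0"
    proof
      assume "x \<in> range f0"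
      then show "x \<in> N0" by (auto simp: f0_def N0_def \<phi>0_def zero_prod_def split: prod.splits)
    next
      assume "x \<in> N0"
      then have "x = f0 (a2,a3,z1,z2)" by (simp add: x f0_def N0_def \<phi>0_def zero_prod_def)
      then show "x \<in> range f0" by blast
    qed
  qed
  have hs: "hsubgroup N0"
    unfolding hsubgroup_def N0_def using P0.unit0 P0.hom P0.inv by simp
  have hd: "\<forall>r>0. hdil r ` N0 \<subseteq> N0" unfolding N0_def using P0.dil by auto
  have hN: "homogeneous_subgroup N0"
    unfolding homogeneous_subgroup_def using hs hd linear_range_props[OF lin, unfolded rng] by blast
  have nN: "normal_hsubgroup N0"
    unfolding normal_hsubgroup_def N0_def by (simp add: P0.hom P0.inv)
  have surj: "\<exists>g. \<phi>0 g = y" for y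
    by (rule exI[of _ "(fst y, snd y, 0, 0, 0, 0)"]) (simp add: \<phi>0_def)
  have cont: "continuous_on UNIV \<phi>0" unfolding \<phi>0_def by (intro continuous_intros)
  have "quotient_h_iso_R2 N0" unfolding N0_def by (rule P0.quot_iso[OF surj cont])
  then show ?thesis unfolding is_h_quotient_R2_def using hN nN by blast
qed

lemma alg:
  fixes p0 p1 p2 p3 q0 q1 q2 q3 a0 a1 a2 a3 b0 b1 b2 b3 :: real
  assumes hA: "p0 * q3 - q0 * p3 = 0" and hB: "p1 * q2 - q1 * p2 = 0"
    and hC: "(p0 + p2) * (q1 - q3) - (q0 + q2) * (p1 - p3) = 0"
    and hD: "(p0 + p2 - p3) * (q1 + q2 - 2 * q3) - (q0 + q2 - q3) * (p1 + p2 - 2 * p3) = 0"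
    and ha1: "a0 * p0 + a1 * p1 + a2 * p2 + a3 * p3 = 1" and ha2: "a0 * q0 + a1 * q1 + a2 * q2 + a3 * q3 = 0"
    and hb1: "b0 * p0 + b1 * p1 + b2 * p2 + b3 * p3 = 0" and hb2: "b0 * q0 + b1 * q1 + b2 * q2 + b3 * q3 = 1"
  shows False
proof -
  have iC: "(p0 + p2) * (q1 - q3) - (q0 + q2) * (p1 - p3) =
     (p0*q1 - q0*p1) - (p0*q3 - q0*p3) - (p1*q2 - q1*p2) - (p2*q3 - q2*p3)" by algebra
  have iD: "(p0 + p2 - p3) * (q1 + q2 - 2 * q3) - (q0 + q2 - q3) * (p1 + p2 - 2 * p3) =
     (p0*q1 - q0*p1) + (p0*q2 - q0*p2) - 2*(p0*q3 - q0*p3) - (p1*q2 - q1*p2) - (p2*q3 - q2*p3) + (p1*q3 - q1*p3)" by algebra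
  have e1: "p0*q1 - q0*p1 = p2*q3 - q2*p3" using hA hB hC iC by linarith
  have e2: "p0*q2 - q0*p2 = - (p1*q3 - q1*p3)" using hA hB hD e1 by algebra
  have pl: "(p0*q1 - q0*p1) * (p2*q3 - q2*p3) - (p0*q2 - q0*p2) * (p1*q3 - q1*p3) + (p0*q3 - q0*p3) * (p1*q2 - q1*p2) = 0"
    by algebra
  then have "(p0*q1 - q0*p1) * (p0*q1 - q0*p1) + (p0*q2 - q0*p2) * (p0*q2 - q0*p2) = 0"
    using e1 e2 hA hB by algebra
  then have z1: "p0*q1 - q0*p1 = 0" and z2: "p0*q2 - q0*p2 = 0"
    using sum_squares_eq_zero_iff by blast+
  have z3: "p2*q3 - q2*p3 = 0" using z1 e1 by simp
  have z4: "p1*q3 - q1*p3 = 0" using z2 e2 by simp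
  have "(a0 * p0 + a1 * p1 + a2 * p2 + a3 * p3) * (b0 * q0 + b1 * q1 + b2 * q2 + b3 * q3)
     - (a0 * q0 + a1 * q1 + a2 * q2 + a3 * q3) * (b0 * p0 + b1 * p1 + b2 * p2 + b3 * p3)
     = (a0*b1 - a1*b0) * (p0*q1 - q0*p1) + (a0*b2 - a2*b0) * (p0*q2 - q0*p2) + (a0*b3 - a3*b0) * (p0*q3 - q0*p3)
     + (a1*b2 - a2*b1) * (p1*q2 - q1*p2) + (a1*b3 - a3*b1) * (p1*q3 - q1*p3) + (a2*b3 - a3*b2) * (p2*q3 - q2*p3)"
    by algebra
  then show False using z1 z2 z3 z4 hA hB ha1 ha2 hb1 hb2 by simp
qed


lemma part2:
  assumes hN: "homogeneous_subgroup N" and nN: "normal_hsubgroup N" and qN: "quotient_h_iso_R2 N"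
  shows "\<exists>A. homogeneous_subgroup A \<and> complementary A N"
proof -
  obtain psi :: "H12 set \<Rightarrow> real \<times> real" where
    bij: "bij_betw psi (hquot N) UNIV"
    and hm: "\<And>g h. psi (hcoset (hmul g h) N) = psi (hcoset g N) + psi (hcoset h N)"
    and dl: "\<And>r g. r > 0 \<Longrightarrow> psi (hcoset (hdil r g) N) = r *\<^sub>R psi (hcoset g N)"
    using qN unfolding quotient_h_iso_R2_def by blast
  define \<phi> where "\<phi> g = psi (hcoset g N)" for g
  interpret P: hhom \<phi> by unfold_locales (simp_all add: \<phi>_def hm dl)
  have hs: "hsubgroup N" using hN unfolding homogeneous_subgroup_def by blast
  have hu: "hcoset hunit N = N" by (simp add: hcoset_def)
  have uN: "hunit \<in> N" using hs unfolding hsubgroup_def by blast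
  have NK: "N = {g. \<phi> g = 0}"
  proof (rule set_eqI)
    fix g
    show "g \<in> N \<longleftrightarrow> g \<in> {g. \<phi> g = 0}"
    proof
      assume "g \<in> N"
      then have "hcoset g N = hcoset hunit N" using csub[OF hs] hu by simp
      then show "g \<in> {g. \<phi> g = 0}" using P.unit0 by (simp add: \<phi>_def)
    next
      assume "g \<in> {g. \<phi> g = 0}"
      then have "psi (hcoset g N) = psi (hcoset hunit N)" using P.unit0 by (simp add: \<phi>_def)
      moreover have "hcoset g N \<in> hquot N" "hcoset hunit N \<in> hquot N" by (auto simp: hquot_def)
      ultimately have "hcoset g N = N" using bij hu unfolding bij_betw_def inj_on_def by metis
      moreover have "g \<in> hcoset g N" using uN unfolding hcoset_def
        by (metis hmul_unit_r image_eqI)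
      ultimately show "g \<in> N" by simp
    qed
  qed
  have surj: "\<exists>g. \<phi> g = y" for y
  proof -
    have "y \<in> psi ` hquot N" using bij unfolding bij_betw_def by blast
    then show ?thesis unfolding hquot_def \<phi>_def by blast
  qed
  obtain p0 q0 where c0: "P.c0 = (p0,q0)" by fastforce
  obtain p1 q1 where c1: "P.c1 = (p1,q1)" by fastforce
  obtain p2 q2 where c2: "P.c2 = (p2,q2)" by fastforce
  obtain p3 q3 where c3: "P.c3 = (p3,q3)" by fastforce
  have F: "\<phi> (x0,x1,x2,x3,z1,z2) = (x0 * p0 + x1 * p1 + x2 * p2 + x3 * p3, x0 * q0 + x1 * q1 + x2 * q2 + x3 * q3)"
    for x0 x1 x2 x3 z1 z2
    unfolding P.formula c0 c1 c2 c3 by simp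
  obtain ga where ga: "\<phi> ga = (1,0)" using surj by blast
  obtain gb where gb: "\<phi> gb = (0,1)" using surj by blast
  obtain a0 a1 a2 a3 x1 x2 where gA: "ga = (a0,a1,a2,a3,x1,x2)" by (rule H12_cases)
  obtain b0 b1 b2 b3 y1 y2 where gB: "gb = (b0,b1,b2,b3,y1,y2)" by (rule H12_cases)
  have "p0 * q3 - q0 * p3 \<noteq> 0 \<or> p1 * q2 - q1 * p2 \<noteq> 0
    \<or> (p0 + p2) * (q1 - q3) - (q0 + q2) * (p1 - p3) \<noteq> 0
    \<or> (p0 + p2 - p3) * (q1 + q2 - 2 * q3) - (q0 + q2 - q3) * (p1 + p2 - 2 * p3) \<noteq> 0"
    using alg[of p0 q3 q0 p3 p1 q2 q1 p2 a0 a1 a2 a3 b0 b1 b2 b3] ga gb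
    unfolding gA gB F by auto
  then show ?thesis
  proof (elim disjE)
    assume h: "p0 * q3 - q0 * p3 \<noteq> 0"
    show ?thesis
      by (rule P.complement[OF NK, where ua=1 and ub=0 and uc=0 and ud=0 and va=0 and vb=0 and vc=0 and vd=1])
         (use h in \<open>simp_all add: F\<close>)
  next
    assume h: "p1 * q2 - q1 * p2 \<noteq> 0"
    show ?thesis
      by (rule P.complement[OF NK, where ua=0 and ub=1 and uc=0 and ud=0 and va=0 and vb=0 and vc=1 and vd=0])
         (use h in \<open>simp_all add: F\<close>)
  next
    assume h: "(p0 + p2) * (q1 - q3) - (q0 + q2) * (p1 - p3) \<noteq> 0"
    show ?thesis
      by (rule P.complement[OF NK, where ua=1 and ub=0 and uc=1 and ud=0 and va=0 and vb=1 and vc=0 and vd="-1"])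
         (use h in \<open>simp_all add: F algebra_simps\<close>)
  next
    assume h: "(p0 + p2 - p3) * (q1 + q2 - 2 * q3) - (q0 + q2 - q3) * (p1 + p2 - 2 * p3) \<noteq> 0"
    show ?thesis
      by (rule P.complement[OF NK, where ua=1 and ub=0 and uc=1 and ud="-1" and va=0 and vb=1 and vc=1 and vd="-2"])
         (use h in \<open>simp_all add: F algebra_simps\<close>)
  qed
qed

theorem proposition11p22:
  shows "is_h_quotient_R2 \<and>
    (\<forall>N. homogeneous_subgroup N \<and> normal_hsubgroup N \<and> quotient_h_iso_R2 N \<longrightarrow>
       (\<exists>A. homogeneous_subgroup A \<and> complementary A N))"
  using part1 part2 by blast

end
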